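(* Let $n=2K+1$, let $m_1,\dots,m_n>0$ be fixed constants, and let $M=\{(x_1,\dots,x_n)\in\mathbb{R}^n: x_1<\dots<x_n\}$ carry the Poisson bracket determined by $\{x_i,x_k\}=\operatorname{sgn}(x_i-x_k)$, i.e. $\{f,g\}=\sum_{i,k}\operatorname{sgn}(x_i-x_k)\frac{\partial f}{\partial x_i}\frac{\partial g}{\partial x_k}$. Set $h_i=m_ie^{x_i}$, $g_i=m_ie^{-x_i}$, $$H_j=\sum_{\substack{I,J\in\binom{[2K+1]}{j}\\ I<J}} h_I g_J,\quad 1\le j\le K,\qquad H_c=\sum_{\substack{I\in\binom{[2K+1]}{K+1},\,J\in\binom{[2K+1]}{K}\\ I<J}} h_I g_J=\prod_{j=1}^{2K+1} m_j e^{(-1)^{j+1}x_j}.$$ Then the functions $H_1,\dots,H_K,H_c$ pairwise Poisson commute.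
   Context: $[k]=\{1,\dots,k\}$ and $\binom{[k]}{j}$ is the set of $j$-element subsets $I=\{i_1<\dots<i_j\}$ of $[k]$. For $I,J\in\binom{[k]}{j}$, $I<J$ means $i_1<j_1<\dots<i_j<j_j$; for $I\in\binom{[k]}{j+1}$, $J\in\binom{[k]}{j}$, $I<J$ means $i_1<j_1<\dots<i_j<j_j<i_{j+1}$. Also $h_I=\prod_{i\in I}h_i$, $g_J=\prod_{j\in J}g_j$. (These are constants of motion of the conservative mCH peakon system $\dot x_j=2\sum_{k\ne j}m_jm_ke^{-|x_j-x_k|}+4\sum_{1\le i<j<k\le n}m_im_ke^{-|x_i-x_k|}$ on $M$.) *)

theory Defs
  imports "HOL-Analysis.Analysis"
begin

(* Points of R^n are functions x :: nat \<Rightarrow> real; only the coordinates x 1, ..., x n matter. *)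

definition phase_M :: "nat \<Rightarrow> (nat \<Rightarrow> real) set" where
  "phase_M n = {x. \<forall>i\<in>{1..n}. \<forall>k\<in>{1..n}. i < k \<longrightarrow> x i < x k}"

definition pderiv_at :: "((nat \<Rightarrow> real) \<Rightarrow> real) \<Rightarrow> nat \<Rightarrow> (nat \<Rightarrow> real) \<Rightarrow> real" where
  "pderiv_at f i x = deriv (\<lambda>t. f (x(i := t))) (x i)"

definition poisson :: "nat \<Rightarrow> ((nat \<Rightarrow> real) \<Rightarrow> real) \<Rightarrow> ((nat \<Rightarrow> real) \<Rightarrow> real)
    \<Rightarrow> (nat \<Rightarrow> real) \<Rightarrow> real" where
  "poisson n f g x = (\<Sum>i\<in>{1..n}. \<Sum>k\<in>{1..n}.
      sgn (x i - x k) * pderiv_at f i x * pderiv_at g k x)"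

definition subsets_of :: "nat \<Rightarrow> nat \<Rightarrow> nat set set" where
  "subsets_of k j = {I. I \<subseteq> {1..k} \<and> card I = j}"

(* I < J for |I| = |J| = j:  i_1 < j_1 < i_2 < j_2 < ... < i_j < j_j *)
definition interlace_eq :: "nat set \<Rightarrow> nat set \<Rightarrow> bool" where
  "interlace_eq I J = (let a = sorted_list_of_set I; b = sorted_list_of_set J; j = card J in
     (\<forall>r<j. a ! r < b ! r) \<and> (\<forall>r. r + 1 < j \<longrightarrow> b ! r < a ! (r + 1)))"

(* I < J for |I| = j+1, |J| = j:  i_1 < j_1 < ... < i_j < j_j < i_{j+1} *)
definition interlace_succ :: "nat set \<Rightarrow> nat set \<Rightarrow> bool" where
  "interlace_succ I J = (let a = sorted_list_of_set I; b = sorted_list_of_set J; j = card J in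
     (\<forall>r<j. a ! r < b ! r \<and> b ! r < a ! (r + 1)))"

definition h_I :: "(nat \<Rightarrow> real) \<Rightarrow> nat set \<Rightarrow> (nat \<Rightarrow> real) \<Rightarrow> real" where
  "h_I m I x = (\<Prod>i\<in>I. m i * exp (x i))"

definition g_J :: "(nat \<Rightarrow> real) \<Rightarrow> nat set \<Rightarrow> (nat \<Rightarrow> real) \<Rightarrow> real" where
  "g_J m J x = (\<Prod>i\<in>J. m i * exp (- x i))"

definition Hj :: "nat \<Rightarrow> (nat \<Rightarrow> real) \<Rightarrow> nat \<Rightarrow> (nat \<Rightarrow> real) \<Rightarrow> real" where
  "Hj K m j x = (\<Sum>(I, J) \<in> {(I, J). I \<in> subsets_of (2*K+1) j \<and> J \<in> subsets_of (2*K+1) j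
                      \<and> interlace_eq I J}. h_I m I x * g_J m J x)"

definition Hc :: "nat \<Rightarrow> (nat \<Rightarrow> real) \<Rightarrow> (nat \<Rightarrow> real) \<Rightarrow> real" where
  "Hc K m x = (\<Sum>(I, J) \<in> {(I, J). I \<in> subsets_of (2*K+1) (K+1) \<and> J \<in> subsets_of (2*K+1) K
                      \<and> interlace_succ I J}. h_I m I x * g_J m J x)"

end

theory Submission
  imports Defs
begin



lemma sl_snoc:
  fixes A :: "nat set"
  assumes "finite A" "\<forall>y\<in>A. y < s"
  shows "sorted_list_of_set (insert s A) = sorted_list_of_set A @ [s]"
proof -
  have "s \<notin> A" using assms by auto
  show ?thesis
    apply (subst sorted_list_of_set_unique[symmetric])
    using assms \<open>s \<notin> A\<close> by (auto simp: sorted_wrt_append)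
qed

lemma sl_last:
  fixes I :: "nat set"
  assumes "I \<subseteq> {1..Suc n}" "Suc n \<in> I"
  shows "sorted_list_of_set I = sorted_list_of_set (I - {Suc n}) @ [Suc n]"
proof -
  have "I = insert (Suc n) (I - {Suc n})" using assms by auto
  moreover have "sorted_list_of_set (insert (Suc n) (I - {Suc n})) = sorted_list_of_set (I - {Suc n}) @ [Suc n]"
    apply (rule sl_snoc) using assms by (auto intro: finite_subset)
  ultimately show ?thesis by metis
qed

lemma sub_Suc: "(I::nat set) \<subseteq> {1..Suc n} \<Longrightarrow> Suc n \<notin> I \<Longrightarrow> I \<subseteq> {1..n}"
  by (auto simp: subset_iff le_Suc_eq)

definition Pall :: "nat \<Rightarrow> (nat set \<times> nat set) set" where
  "Pall n = {(I,J). I \<subseteq> {1..n} \<and> J \<subseteq> {1..n} \<and> card I = card J \<and> interlace_eq I J}"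
definition Qall :: "nat \<Rightarrow> (nat set \<times> nat set) set" where
  "Qall n = {(I,J). I \<subseteq> {1..n} \<and> J \<subseteq> {1..n} \<and> card I = Suc (card J) \<and> interlace_succ I J}"

lemma sl_nth_in:
  fixes I :: "nat set"
  assumes "finite I" "r < card I"
  shows "sorted_list_of_set I ! r \<in> I"
  using assms by (metis length_sorted_list_of_set nth_mem set_sorted_list_of_set)

lemma Pall_Suc: "Pall (Suc n) = Pall n \<union> (\<lambda>(I,J). (I, insert (Suc n) J)) ` Qall n"
proof (intro equalityI subsetI)
  fix p assume p: "p \<in> Pall (Suc n)"
  obtain I J where pIJ: "p = (I,J)" by fastforce
  have IJ: "I \<subseteq> {1..Suc n}" "J \<subseteq> {1..Suc n}" "card I = card J" "interlace_eq I J"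
    using p pIJ by (auto simp: Pall_def)
  have fin: "finite I" "finite J" using IJ by (auto intro: finite_subset)
  define a where "a = sorted_list_of_set I"
  define b where "b = sorted_list_of_set J"
  have la: "length a = card I" and lb: "length b = card J" by (simp_all add: a_def b_def)
  have int1: "\<forall>r<card J. a ! r < b ! r" and int2: "\<forall>r. r + 1 < card J \<longrightarrow> b ! r < a ! (r + 1)"
    using IJ(4) by (auto simp: interlace_eq_def Let_def a_def b_def)
  have sI: "Suc n \<notin> I"
  proof
    assume sI: "Suc n \<in> I"
    have a_eq: "a = sorted_list_of_set (I - {Suc n}) @ [Suc n]"
      using sl_last[OF IJ(1) sI] a_def by simp
    have cI: "card I \<ge> 1" using sI fin by (metis One_nat_def Suc_leI card_gt_0_iff empty_iff)
    have "a ! (card I - 1) = Suc n" using a_eq la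
      by (metis diff_Suc_1 length_append_singleton nth_append_length)
    moreover have "b ! (card I - 1) \<in> J" using sl_nth_in[OF fin(2)] cI IJ(3) b_def by auto
    moreover have "a ! (card I - 1) < b ! (card I - 1)" using int1 cI IJ(3) by auto
    ultimately show False using IJ(2) by auto
  qed
  show "p \<in> Pall n \<union> (\<lambda>(I,J). (I, insert (Suc n) J)) ` Qall n"
  proof (cases "Suc n \<in> J")
    case False
    then have "p \<in> Pall n" using sI IJ pIJ sub_Suc[OF IJ(1) sI] sub_Suc[OF IJ(2) False] unfolding Pall_def by auto
    then show ?thesis by simp
  next
    case True
    define J0 where "J0 = J - {Suc n}"
    have b_eq: "b = sorted_list_of_set J0 @ [Suc n]"
      using sl_last[OF IJ(2) True] b_def J0_def by simp
    have cJ: "card J = Suc (card J0)" using True fin J0_def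
      by (metis card_Suc_Diff1)
    have lb0: "length (sorted_list_of_set J0) = card J0" by simp
    have "interlace_succ I J0"
      unfolding interlace_succ_def Let_def
    proof (intro allI impI)
      fix r assume r: "r < card J0"
      have "a ! r < b ! r" using int1 r cJ by auto
      moreover have "b ! r < a ! (r+1)" using int2 r cJ by auto
      moreover have "b ! r = sorted_list_of_set J0 ! r" using b_eq r lb0 by (simp add: nth_append)
      ultimately show "sorted_list_of_set I ! r < sorted_list_of_set J0 ! r \<and>
          sorted_list_of_set J0 ! r < sorted_list_of_set I ! (r + 1)" using a_def by simp
    qed
    moreover have "J0 \<subseteq> {1..n}" using sub_Suc[of J0 n] IJ(2) J0_def by auto
    ultimately have "(I, J0) \<in> Qall n" using IJ sI cJ J0_def sub_Suc[OF IJ(1) sI] unfolding Qall_def by auto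
    moreover have "J = insert (Suc n) J0" using True J0_def by auto
    ultimately show ?thesis using pIJ by auto
  qed
next
  fix p assume p: "p \<in> Pall n \<union> (\<lambda>(I,J). (I, insert (Suc n) J)) ` Qall n"
  then show "p \<in> Pall (Suc n)"
  proof
    assume "p \<in> Pall n" then show ?thesis unfolding Pall_def by auto
  next
    assume "p \<in> (\<lambda>(I,J). (I, insert (Suc n) J)) ` Qall n"
    then obtain I J0 where pIJ: "p = (I, insert (Suc n) J0)" and q: "(I,J0) \<in> Qall n" by auto
    have IJ: "I \<subseteq> {1..n}" "J0 \<subseteq> {1..n}" "card I = Suc (card J0)" "interlace_succ I J0"
      using q by (auto simp: Qall_def)
    have fin: "finite I" "finite J0" using IJ by (auto intro: finite_subset)
    have nJ: "Suc n \<notin> J0" using IJ by auto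
    have b_eq: "sorted_list_of_set (insert (Suc n) J0) = sorted_list_of_set J0 @ [Suc n]"
      apply (rule sl_snoc) using fin IJ by auto
    have cJ: "card (insert (Suc n) J0) = Suc (card J0)" using fin nJ by simp
    have int: "\<forall>r<card J0. sorted_list_of_set I ! r < sorted_list_of_set J0 ! r \<and>
          sorted_list_of_set J0 ! r < sorted_list_of_set I ! (r + 1)"
      using IJ(4) by (simp add: interlace_succ_def Let_def)
    have "interlace_eq I (insert (Suc n) J0)"
      unfolding interlace_eq_def Let_def b_eq cJ
    proof (intro conjI allI impI)
      fix r assume r: "r < Suc (card J0)"
      show "sorted_list_of_set I ! r < (sorted_list_of_set J0 @ [Suc n]) ! r"
      proof (cases "r < card J0")
        case True then show ?thesis using int by (simp add: nth_append)
      next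
        case False
        then have "r = card J0" using r by simp
        moreover have "sorted_list_of_set I ! r \<in> I" using sl_nth_in[OF fin(1)] r IJ(3) by simp
        ultimately show ?thesis using IJ(1) by (auto simp: nth_append)
      qed
    next
      fix r assume r: "r + 1 < Suc (card J0)"
      then show "(sorted_list_of_set J0 @ [Suc n]) ! r < sorted_list_of_set I ! (r + 1)"
        using int by (simp add: nth_append)
    qed
    then show ?thesis using pIJ IJ cJ unfolding Pall_def by auto
  qed
qed

lemma Qall_Suc: "Qall (Suc n) = Qall n \<union> (\<lambda>(I,J). (insert (Suc n) I, J)) ` Pall n"
proof (intro equalityI subsetI)
  fix p assume p: "p \<in> Qall (Suc n)"
  obtain I J where pIJ: "p = (I,J)" by fastforce
  have IJ: "I \<subseteq> {1..Suc n}" "J \<subseteq> {1..Suc n}" "card I = Suc (card J)" "interlace_succ I J"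
    using p pIJ by (auto simp: Qall_def)
  have fin: "finite I" "finite J" using IJ by (auto intro: finite_subset)
  define a where "a = sorted_list_of_set I"
  define b where "b = sorted_list_of_set J"
  have la: "length a = card I" and lb: "length b = card J" by (simp_all add: a_def b_def)
  have int: "\<forall>r<card J. a ! r < b ! r \<and> b ! r < a ! (r + 1)"
    using IJ(4) by (auto simp: interlace_succ_def Let_def a_def b_def)
  have sJ: "Suc n \<notin> J"
  proof
    assume sJ: "Suc n \<in> J"
    have b_eq: "b = sorted_list_of_set (J - {Suc n}) @ [Suc n]"
      using sl_last[OF IJ(2) sJ] b_def by simp
    have cJ: "card J \<ge> 1" using sJ fin by (metis One_nat_def Suc_leI card_gt_0_iff empty_iff)
    have "b ! (card J - 1) = Suc n" using b_eq lb
      by (metis diff_Suc_1 length_append_singleton nth_append_length)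
    moreover have "a ! (card J - 1 + 1) \<in> I" using sl_nth_in[OF fin(1)] cJ IJ(3) a_def by auto
    moreover have "b ! (card J - 1) < a ! (card J - 1 + 1)" using int cJ
      by (metis One_nat_def Suc_le_eq diff_less zero_less_one)
    ultimately show False using IJ(1) by auto
  qed
  show "p \<in> Qall n \<union> (\<lambda>(I,J). (insert (Suc n) I, J)) ` Pall n"
  proof (cases "Suc n \<in> I")
    case False
    then have "p \<in> Qall n" using sJ IJ pIJ sub_Suc[OF IJ(1) False] sub_Suc[OF IJ(2) sJ] unfolding Qall_def by auto
    then show ?thesis by simp
  next
    case True
    define I0 where "I0 = I - {Suc n}"
    have a_eq: "a = sorted_list_of_set I0 @ [Suc n]"
      using sl_last[OF IJ(1) True] a_def I0_def by simp
    have cI: "card I = Suc (card I0)" using True fin I0_def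
      by (metis card_Suc_Diff1)
    have la0: "length (sorted_list_of_set I0) = card I0" by simp
    have "interlace_eq I0 J"
      unfolding interlace_eq_def Let_def
    proof (intro conjI allI impI)
      fix r assume r: "r < card J"
      have "a ! r < b ! r" using int r by auto
      moreover have "a ! r = sorted_list_of_set I0 ! r" using a_eq r la0 cI IJ(3) by (simp add: nth_append)
      ultimately show "sorted_list_of_set I0 ! r < sorted_list_of_set J ! r" using b_def by simp
    next
      fix r assume r: "r + 1 < card J"
      have "b ! r < a ! (r+1)" using int r by auto
      moreover have "a ! (r+1) = sorted_list_of_set I0 ! (r+1)" using a_eq r la0 cI IJ(3) by (simp add: nth_append)
      ultimately show "sorted_list_of_set J ! r < sorted_list_of_set I0 ! (r + 1)" using b_def by simp
    qed
    moreover have "I0 \<subseteq> {1..n}" using sub_Suc[of I0 n] IJ(1) I0_def by auto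
    ultimately have "(I0, J) \<in> Pall n" using IJ sJ cI I0_def sub_Suc[OF IJ(2) sJ] unfolding Pall_def by auto
    moreover have "I = insert (Suc n) I0" using True I0_def by auto
    ultimately show ?thesis using pIJ by auto
  qed
next
  fix p assume p: "p \<in> Qall n \<union> (\<lambda>(I,J). (insert (Suc n) I, J)) ` Pall n"
  then show "p \<in> Qall (Suc n)"
  proof
    assume "p \<in> Qall n" then show ?thesis unfolding Qall_def by auto
  next
    assume "p \<in> (\<lambda>(I,J). (insert (Suc n) I, J)) ` Pall n"
    then obtain I0 J where pIJ: "p = (insert (Suc n) I0, J)" and q: "(I0,J) \<in> Pall n" by auto
    have IJ: "I0 \<subseteq> {1..n}" "J \<subseteq> {1..n}" "card I0 = card J" "interlace_eq I0 J"
      using q by (auto simp: Pall_def)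
    have fin: "finite I0" "finite J" using IJ by (auto intro: finite_subset)
    have nI: "Suc n \<notin> I0" using IJ by auto
    have a_eq: "sorted_list_of_set (insert (Suc n) I0) = sorted_list_of_set I0 @ [Suc n]"
      apply (rule sl_snoc) using fin IJ by auto
    have cI: "card (insert (Suc n) I0) = Suc (card I0)" using fin nI by simp
    have int1: "\<forall>r<card J. sorted_list_of_set I0 ! r < sorted_list_of_set J ! r"
      and int2: "\<forall>r. r + 1 < card J \<longrightarrow> sorted_list_of_set J ! r < sorted_list_of_set I0 ! (r + 1)"
      using IJ(4) by (simp_all add: interlace_eq_def Let_def)
    have "interlace_succ (insert (Suc n) I0) J"
      unfolding interlace_succ_def Let_def a_eq
    proof (intro conjI allI impI)
      fix r assume r: "r < card J"
      show "(sorted_list_of_set I0 @ [Suc n]) ! r < sorted_list_of_set J ! r"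
        using int1 r IJ(3) by (simp add: nth_append)
      show "sorted_list_of_set J ! r < (sorted_list_of_set I0 @ [Suc n]) ! (r + 1)"
      proof (cases "r + 1 < card J")
        case True then show ?thesis using int2 IJ(3) by (simp add: nth_append)
      next
        case False
        then have "r + 1 = card I0" using r IJ(3) by simp
        moreover have "sorted_list_of_set J ! r \<in> J" using sl_nth_in[OF fin(2)] r by simp
        ultimately show ?thesis using IJ(2) by (auto simp: nth_append)
      qed
    qed
    then show ?thesis using pIJ IJ cI unfolding Qall_def by auto
  qed
qed




definition ev :: "nat set \<Rightarrow> nat set \<Rightarrow> nat \<Rightarrow> real" where
  "ev I J i = (if i \<in> I then 1 else 0) - (if i \<in> J then 1 else 0)"

definition wt :: "(nat \<Rightarrow> real) \<Rightarrow> (nat \<Rightarrow> real) \<Rightarrow> nat set \<Rightarrow> nat set \<Rightarrow> real" where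
  "wt m x I J = h_I m I x * g_J m J x"

definition UA where "UA m x n (l::real) = (\<Sum>(I,J)\<in>Pall n. l ^ card I * wt m x I J)"
definition dUA where "dUA m x n (l::real) i = (\<Sum>(I,J)\<in>Pall n. l ^ card I * wt m x I J * ev I J i)"
definition UB where "UB m x n (l::real) = (\<Sum>(I,J)\<in>Qall n. l ^ card I * wt m x I J)"
definition dUB where "dUB m x n (l::real) i = (\<Sum>(I,J)\<in>Qall n. l ^ card I * wt m x I J * ev I J i)"

definition sg :: "nat \<Rightarrow> nat \<Rightarrow> real" where
  "sg i k = (if k < i then 1 else if i < k then -1 else 0)"

definition Br :: "nat \<Rightarrow> (nat \<Rightarrow> real) \<Rightarrow> (nat \<Rightarrow> real) \<Rightarrow> real" where
  "Br n f g = (\<Sum>i\<in>{1..n}. \<Sum>k\<in>{1..n}. sg i k * f i * g k)"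

lemma finite_Pall: "finite (Pall n)"
proof -
  have "Pall n \<subseteq> Pow {1..n} \<times> Pow {1..n}" by (auto simp: Pall_def)
  then show ?thesis by (rule finite_subset) auto
qed

lemma finite_Qall: "finite (Qall n)"
proof -
  have "Qall n \<subseteq> Pow {1..n} \<times> Pow {1..n}" by (auto simp: Qall_def)
  then show ?thesis by (rule finite_subset) auto
qed

lemma Pall_sub: "(I,J) \<in> Pall n \<Longrightarrow> I \<subseteq> {1..n} \<and> J \<subseteq> {1..n} \<and> card I = card J"
  by (auto simp: Pall_def)
lemma Qall_sub: "(I,J) \<in> Qall n \<Longrightarrow> I \<subseteq> {1..n} \<and> J \<subseteq> {1..n} \<and> card I = Suc (card J)"
  by (auto simp: Qall_def)

lemma sum_Pall_Suc:
  "sum F (Pall (Suc n)) = sum F (Pall n) + (\<Sum>(I,J)\<in>Qall n. F (I, insert (Suc n) J))"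
proof -
  have disj: "Pall n \<inter> (\<lambda>(I,J). (I, insert (Suc n) J)) ` Qall n = {}"
    by (auto dest!: Pall_sub)
  have inj: "inj_on (\<lambda>(I,J). (I, insert (Suc n) J)) (Qall n)"
  proof (rule inj_onI, clarsimp)
    fix I J J' assume a: "(I,J) \<in> Qall n" "(I,J') \<in> Qall n" "insert (Suc n) J = insert (Suc n) J'"
    have "Suc n \<notin> J" "Suc n \<notin> J'" using a(1,2) by (auto dest!: Qall_sub)
    then show "J = J'" using a(3) by (metis insert_ident)
  qed
  have "sum F (Pall (Suc n)) = sum F (Pall n) + sum F ((\<lambda>(I,J). (I, insert (Suc n) J)) ` Qall n)"
    unfolding Pall_Suc by (rule sum.union_disjoint) (use finite_Pall finite_Qall disj in auto)
  also have "sum F ((\<lambda>(I,J). (I, insert (Suc n) J)) ` Qall n) = (\<Sum>(I,J)\<in>Qall n. F (I, insert (Suc n) J))"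
    by (subst sum.reindex[OF inj]) (simp add: case_prod_unfold)
  finally show ?thesis .
qed

lemma sum_Qall_Suc:
  "sum F (Qall (Suc n)) = sum F (Qall n) + (\<Sum>(I,J)\<in>Pall n. F (insert (Suc n) I, J))"
proof -
  have disj: "Qall n \<inter> (\<lambda>(I,J). (insert (Suc n) I, J)) ` Pall n = {}"
    by (auto dest!: Qall_sub)
  have inj: "inj_on (\<lambda>(I,J). (insert (Suc n) I, J)) (Pall n)"
  proof (rule inj_onI, clarsimp)
    fix I I' J assume a: "(I,J) \<in> Pall n" "(I',J) \<in> Pall n" "insert (Suc n) I = insert (Suc n) I'"
    have "Suc n \<notin> I" "Suc n \<notin> I'" using a(1,2) by (auto dest!: Pall_sub)
    then show "I = I'" using a(3) by (metis insert_ident)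
  qed
  have "sum F (Qall (Suc n)) = sum F (Qall n) + sum F ((\<lambda>(I,J). (insert (Suc n) I, J)) ` Pall n)"
    unfolding Qall_Suc by (rule sum.union_disjoint) (use finite_Pall finite_Qall disj in auto)
  also have "sum F ((\<lambda>(I,J). (insert (Suc n) I, J)) ` Pall n) = (\<Sum>(I,J)\<in>Pall n. F (insert (Suc n) I, J))"
    by (subst sum.reindex[OF inj]) (simp add: case_prod_unfold)
  finally show ?thesis .
qed

lemma wt_insJ: "finite J \<Longrightarrow> s \<notin> J \<Longrightarrow> wt m x I (insert s J) = m s * exp (- x s) * wt m x I J"
  by (simp add: wt_def g_J_def)
lemma wt_insI: "finite I \<Longrightarrow> s \<notin> I \<Longrightarrow> wt m x (insert s I) J = m s * exp (x s) * wt m x I J"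
  by (simp add: wt_def h_I_def)
lemma ev_insJ: "s \<notin> I \<Longrightarrow> s \<notin> J \<Longrightarrow> ev I (insert s J) i = ev I J i - (if i = s then 1 else 0)"
  by (simp add: ev_def)
lemma ev_insI: "s \<notin> I \<Longrightarrow> s \<notin> J \<Longrightarrow> ev (insert s I) J i = ev I J i + (if i = s then 1 else 0)"
  by (simp add: ev_def)

lemma Pall_facts: "(I,J) \<in> Pall n \<Longrightarrow> finite I \<and> finite J \<and> Suc n \<notin> I \<and> Suc n \<notin> J"
  by (auto simp: Pall_def intro: finite_subset)
lemma Qall_facts: "(I,J) \<in> Qall n \<Longrightarrow> finite I \<and> finite J \<and> Suc n \<notin> I \<and> Suc n \<notin> J"
  by (auto simp: Qall_def intro: finite_subset)

lemma fin_of_sub: "I \<subseteq> {1..(n::nat)} \<Longrightarrow> finite I" by (auto intro: finite_subset)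

lemma UA_Suc: "UA m x (Suc n) l = UA m x n l + m (Suc n) * exp (- x (Suc n)) * UB m x n l"
proof -
  have "(\<Sum>(I,J)\<in>Qall n. l ^ card I * wt m x I (insert (Suc n) J))
      = (\<Sum>(I,J)\<in>Qall n. m (Suc n) * exp (- x (Suc n)) * (l ^ card I * wt m x I J))"
    by (rule sum.cong[OF refl]) (auto dest!: Qall_facts simp: wt_insJ ev_insJ wt_insI ev_insI algebra_simps)
  then show ?thesis unfolding UA_def UB_def sum_Pall_Suc
    by (simp add: sum_distrib_left case_prod_unfold)
qed

lemma UB_Suc: "UB m x (Suc n) l = UB m x n l + l * m (Suc n) * exp (x (Suc n)) * UA m x n l"
proof -
  have "(\<Sum>(I,J)\<in>Pall n. l ^ card (insert (Suc n) I) * wt m x (insert (Suc n) I) J)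
      = (\<Sum>(I,J)\<in>Pall n. l * m (Suc n) * exp (x (Suc n)) * (l ^ card I * wt m x I J))"
    by (rule sum.cong[OF refl]) (auto dest!: Pall_facts simp: wt_insJ ev_insJ wt_insI ev_insI algebra_simps)
  then show ?thesis unfolding UA_def UB_def sum_Qall_Suc
    by (simp add: sum_distrib_left case_prod_unfold)
qed

lemma dUA_Suc: "dUA m x (Suc n) l i = dUA m x n l i
   + m (Suc n) * exp (- x (Suc n)) * (dUB m x n l i - (if i = Suc n then UB m x n l else 0))"
proof -
  have "(\<Sum>(I,J)\<in>Qall n. l ^ card I * wt m x I (insert (Suc n) J) * ev I (insert (Suc n) J) i)
      = (\<Sum>(I,J)\<in>Qall n. m (Suc n) * exp (- x (Suc n)) * (l ^ card I * wt m x I J * ev I J i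
            - (if i = Suc n then l ^ card I * wt m x I J else 0)))"
    by (rule sum.cong[OF refl]) (auto dest!: Qall_facts simp: wt_insJ ev_insJ wt_insI ev_insI algebra_simps)
  then show ?thesis unfolding dUA_def UB_def dUB_def sum_Pall_Suc
    by (simp add: sum_distrib_left case_prod_unfold sum_subtractf right_diff_distrib)
qed

lemma dUB_Suc: "dUB m x (Suc n) l i = dUB m x n l i
   + l * m (Suc n) * exp (x (Suc n)) * (dUA m x n l i + (if i = Suc n then UA m x n l else 0))"
proof -
  have "(\<Sum>(I,J)\<in>Pall n. l ^ card (insert (Suc n) I) * wt m x (insert (Suc n) I) J * ev (insert (Suc n) I) J i)
      = (\<Sum>(I,J)\<in>Pall n. l * m (Suc n) * exp (x (Suc n)) * (l ^ card I * wt m x I J * ev I J i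
            + (if i = Suc n then l ^ card I * wt m x I J else 0)))"
    by (rule sum.cong[OF refl]) (auto dest!: Pall_facts simp: wt_insJ ev_insJ wt_insI ev_insI algebra_simps)
  then show ?thesis unfolding dUA_def UA_def dUB_def sum_Qall_Suc
    by (simp add: sum_distrib_left case_prod_unfold sum.distrib distrib_left)
qed

lemma ev_out: "I \<subseteq> {1..n} \<Longrightarrow> J \<subseteq> {1..n} \<Longrightarrow> i \<notin> {1..n} \<Longrightarrow> ev I J i = 0"
  unfolding ev_def by auto
lemma dUA_out: "i \<notin> {1..n} \<Longrightarrow> dUA m x n l i = 0"
  unfolding dUA_def by (rule sum.neutral) (auto simp: Pall_def ev_out)
lemma dUB_out: "i \<notin> {1..n} \<Longrightarrow> dUB m x n l i = 0"
  unfolding dUB_def by (rule sum.neutral) (auto simp: Qall_def ev_out)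




lemma Qall_0: "Qall 0 = {}" by (auto simp: Qall_def)
lemma Pall_0: "Pall 0 = {({},{})}" by (auto simp: Pall_def interlace_eq_def)

lemma ivl_Suc: "{1..Suc n} = insert (Suc n) {1..n}" by auto

lemma Br_Suc: "Br (Suc n) f g = Br n f g - g (Suc n) * (\<Sum>i\<in>{1..n}. f i) + f (Suc n) * (\<Sum>k\<in>{1..n}. g k)"
proof -
  have s1: "(\<Sum>i\<in>{1..n}. sg i (Suc n) * f i * g (Suc n)) = - (g (Suc n) * (\<Sum>i\<in>{1..n}. f i))"
    by (simp add: sg_def sum_distrib_left sum_negf[symmetric] algebra_simps)
  have s2: "(\<Sum>k\<in>{1..n}. sg (Suc n) k * f (Suc n) * g k) = f (Suc n) * (\<Sum>k\<in>{1..n}. g k)"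
    by (simp add: sg_def sum_distrib_left algebra_simps)
  have "Br (Suc n) f g = (\<Sum>i\<in>{1..n}. (sg i (Suc n) * f i * g (Suc n) + (\<Sum>k\<in>{1..n}. sg i k * f i * g k)))
      + (sg (Suc n) (Suc n) * f (Suc n) * g (Suc n) + (\<Sum>k\<in>{1..n}. sg (Suc n) k * f (Suc n) * g k))"
    unfolding Br_def ivl_Suc by (simp add: add.commute)
  also have "\<dots> = Br n f g - g (Suc n) * (\<Sum>i\<in>{1..n}. f i) + f (Suc n) * (\<Sum>k\<in>{1..n}. g k)"
    unfolding sum.distrib s1 s2 Br_def by (simp add: sg_def)
  finally show ?thesis .
qed

lemma Br_cong: "(\<And>i. i \<in> {1..n} \<Longrightarrow> f i = f' i) \<Longrightarrow> (\<And>i. i \<in> {1..n} \<Longrightarrow> g i = g' i) \<Longrightarrow> Br n f g = Br n f' g'"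
  unfolding Br_def by (intro sum.cong) auto

lemma Br_addL: "Br n (\<lambda>i. f i + c * f2 i) g = Br n f g + c * Br n f2 g"
  unfolding Br_def by (simp add: algebra_simps sum.distrib sum_distrib_left)
lemma Br_addR: "Br n f (\<lambda>i. g i + c * g2 i) = Br n f g + c * Br n f g2"
  unfolding Br_def by (simp add: algebra_simps sum.distrib sum_distrib_left)

lemma Br_antisym: "Br n f g = - Br n g f"
proof -
  have "Br n g f = (\<Sum>k\<in>{1..n}. \<Sum>i\<in>{1..n}. sg k i * g k * f i)" by (simp add: Br_def)
  also have "\<dots> = (\<Sum>i\<in>{1..n}. \<Sum>k\<in>{1..n}. sg k i * g k * f i)" by (rule sum.swap)
  also have "\<dots> = - Br n f g" unfolding Br_def sum_negf[symmetric]
    by (intro sum.cong refl) (simp add: sg_def)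
  finally show ?thesis by simp
qed

lemma Br_self: "Br n f f = 0" using Br_antisym[of n f f] by simp

context fixes m x :: "nat \<Rightarrow> real"
begin

lemma sums_inv: "(\<Sum>i\<in>{1..n}. dUA m x n l i) = 0 \<and> (\<Sum>i\<in>{1..n}. dUB m x n l i) = UB m x n l"
proof (induction n)
  case 0 then show ?case by (simp add: UB_def Qall_0)
next
  case (Suc n)
  define a where "a = m (Suc n) * exp (x (Suc n))"
  define b where "b = m (Suc n) * exp (- x (Suc n))"
  have outA: "dUA m x n l (Suc n) = 0" and outB: "dUB m x n l (Suc n) = 0" by (simp_all add: dUA_out dUB_out)
  have A1: "(\<Sum>i\<in>{1..n}. dUA m x (Suc n) l i) = (\<Sum>i\<in>{1..n}. dUA m x n l i + b * dUB m x n l i)"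
    by (intro sum.cong refl) (simp add: dUA_Suc b_def)
  have B1: "(\<Sum>i\<in>{1..n}. dUB m x (Suc n) l i) = (\<Sum>i\<in>{1..n}. dUB m x n l i + l * a * dUA m x n l i)"
    by (intro sum.cong refl) (simp add: dUB_Suc a_def)
  have "(\<Sum>i\<in>{1..Suc n}. dUA m x (Suc n) l i) = dUA m x (Suc n) l (Suc n) + (\<Sum>i\<in>{1..n}. dUA m x (Suc n) l i)"
    unfolding ivl_Suc by simp
  also have "\<dots> = 0" unfolding A1 sum.distrib sum_distrib_left[symmetric]
    using Suc.IH by (simp add: dUA_Suc outA outB b_def)
  finally have c1: "(\<Sum>i\<in>{1..Suc n}. dUA m x (Suc n) l i) = 0" .
  have "(\<Sum>i\<in>{1..Suc n}. dUB m x (Suc n) l i) = dUB m x (Suc n) l (Suc n) + (\<Sum>i\<in>{1..n}. dUB m x (Suc n) l i)"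
    unfolding ivl_Suc by simp
  also have "\<dots> = UB m x (Suc n) l" unfolding B1 sum.distrib sum_distrib_left[symmetric]
    using Suc.IH by (simp add: dUB_Suc UB_Suc outA outB a_def algebra_simps)
  finally show ?case using c1 by simp
qed

end



lemma step_alg:
  fixes dA dB dA' dB' nA nB nA' nB' :: "nat \<Rightarrow> real" and A B A' B' a b l \<mu> :: real
  assumes lm: "l \<noteq> \<mu>"
    and IH1: "Br n dA dA' = 0" and IH2: "Br n dB dB' = 0"
    and hX: "(\<mu>-l) * Br n dA dB' = l*A*B' - \<mu>*A'*B"
    and hY: "(\<mu>-l) * Br n dB dA' = \<mu>*A'*B - l*A*B'"
    and sA: "(\<Sum>i\<in>{1..n}. dA i) = 0" and sB: "(\<Sum>i\<in>{1..n}. dB i) = B"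
    and sA': "(\<Sum>i\<in>{1..n}. dA' i) = 0" and sB': "(\<Sum>i\<in>{1..n}. dB' i) = B'"
    and nA: "\<And>i. i \<in> {1..n} \<Longrightarrow> nA i = dA i + b * dB i" and nAs: "nA (Suc n) = - b * B"
    and nB: "\<And>i. i \<in> {1..n} \<Longrightarrow> nB i = dB i + (l*a) * dA i" and nBs: "nB (Suc n) = l*a*A"
    and nA': "\<And>i. i \<in> {1..n} \<Longrightarrow> nA' i = dA' i + b * dB' i" and nAs': "nA' (Suc n) = - b * B'"
    and nB': "\<And>i. i \<in> {1..n} \<Longrightarrow> nB' i = dB' i + (\<mu>*a) * dA' i" and nBs': "nB' (Suc n) = \<mu>*a*A'"
  shows "Br (Suc n) nA nA' = 0" "Br (Suc n) nB nB' = 0"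
    "(\<mu>-l) * Br (Suc n) nA nB' = l*(A + b*B)*(B' + \<mu>*a*A') - \<mu>*(A' + b*B')*(B + l*a*A)"
proof -
  define X where "X = Br n dA dB'"
  define Y where "Y = Br n dB dA'"
  have XY: "X + Y = 0"
  proof -
    have "(\<mu>-l) * (X+Y) = 0" using hX hY unfolding X_def Y_def by (simp add: algebra_simps)
    then show ?thesis using lm by simp
  qed
  have snA: "(\<Sum>i\<in>{1..n}. nA i) = b * B"
    using sA sB by (simp add: nA sum.distrib sum_distrib_left[symmetric])
  have snB: "(\<Sum>i\<in>{1..n}. nB i) = B"
    using sA sB by (simp add: nB sum.distrib sum_distrib_left[symmetric])
  have snA': "(\<Sum>i\<in>{1..n}. nA' i) = b * B'"
    using sA' sB' by (simp add: nA' sum.distrib sum_distrib_left[symmetric])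
  have snB': "(\<Sum>i\<in>{1..n}. nB' i) = B'"
    using sA' sB' by (simp add: nB' sum.distrib sum_distrib_left[symmetric])
  have bAA: "Br n nA nA' = b * Y + b * X"
  proof -
    have "Br n nA nA' = Br n (\<lambda>i. dA i + b * dB i) (\<lambda>i. dA' i + b * dB' i)"
      by (rule Br_cong) (simp_all add: nA nA')
    also have "\<dots> = b * Y + b * X"
      unfolding Br_addL Br_addR X_def Y_def using IH1 IH2 by (simp add: algebra_simps)
    finally show ?thesis .
  qed
  have "Br (Suc n) nA nA' = b * (X + Y)"
    unfolding Br_Suc bAA snA snA' nAs nAs' by (simp add: algebra_simps)
  then show "Br (Suc n) nA nA' = 0" using XY by simp
  have bBB: "Br n nB nB' = \<mu>*a*Y + l*a*X"
  proof -
    have "Br n nB nB' = Br n (\<lambda>i. dB i + (l*a) * dA i) (\<lambda>i. dB' i + (\<mu>*a) * dA' i)"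
      by (rule Br_cong) (simp_all add: nB nB')
    also have "\<dots> = \<mu>*a*Y + l*a*X"
      unfolding Br_addL Br_addR X_def Y_def using IH1 IH2 Br_antisym[of n dA dB'] Br_antisym[of n dB dA']
      by (simp add: algebra_simps)
    finally show ?thesis .
  qed
  have Y: "Y = - X" using XY by simp
  show "Br (Suc n) nB nB' = 0"
  proof -
    have "(\<mu>-l) * Br (Suc n) nB nB' = -a*(\<mu>-l)*((\<mu>-l)*X) + (\<mu>-l)*a*(l*A*B' - \<mu>*A'*B)"
      unfolding Br_Suc bBB snB snB' nBs nBs' Y by (simp add: algebra_simps)
    also have "\<dots> = 0" using hX unfolding X_def by simp
    finally show ?thesis using lm by simp
  qed
  have bAB: "Br n nA nB' = X + b*(\<mu>*a)*Y"
  proof -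
    have "Br n nA nB' = Br n (\<lambda>i. dA i + b * dB i) (\<lambda>i. dB' i + (\<mu>*a) * dA' i)"
      by (rule Br_cong) (simp_all add: nA nB')
    also have "\<dots> = X + b*(\<mu>*a)*Y"
      unfolding Br_addL Br_addR X_def Y_def using IH1 IH2 by (simp add: algebra_simps)
    finally show ?thesis .
  qed
  have "(\<mu>-l) * Br (Suc n) nA nB' = (\<mu>-l)*X + b*\<mu>*a*((\<mu>-l)*Y) - (\<mu>-l)*(\<mu>*a*A'*(b*B) + b*B*B')"
    unfolding Br_Suc bAB snA snB' nAs nBs' by (simp add: algebra_simps)
  also have "\<dots> = (l*A*B' - \<mu>*A'*B) + b*\<mu>*a*(\<mu>*A'*B - l*A*B') - (\<mu>-l)*(\<mu>*a*A'*(b*B) + b*B*B')"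
    using hX hY unfolding X_def Y_def by simp
  also have "\<dots> = l*(A + b*B)*(B' + \<mu>*a*A') - \<mu>*(A' + b*B')*(B + l*a*A)"
    by (simp add: algebra_simps)
  finally show "(\<mu>-l) * Br (Suc n) nA nB' = l*(A + b*B)*(B' + \<mu>*a*A') - \<mu>*(A' + b*B')*(B + l*a*A)" .
qed




context fixes m x :: "nat \<Rightarrow> real"
begin

lemma br_inv: "Br n (dUA m x n l) (dUA m x n \<mu>) = 0 \<and> Br n (dUB m x n l) (dUB m x n \<mu>) = 0 \<and>
  (\<mu> - l) * Br n (dUA m x n l) (dUB m x n \<mu>) = l * UA m x n l * UB m x n \<mu> - \<mu> * UA m x n \<mu> * UB m x n l"
proof (induction n arbitrary: l \<mu>)
  case 0 then show ?case by (simp add: Br_def UB_def Qall_0)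
next
  case (Suc n)
  show ?case
  proof (cases "l = \<mu>")
    case True then show ?thesis by (simp add: Br_self)
  next
    case False
    define a where "a = m (Suc n) * exp (x (Suc n))"
    define b where "b = m (Suc n) * exp (- x (Suc n))"
    have outs: "dUA m x n l (Suc n) = 0" "dUB m x n l (Suc n) = 0"
      "dUA m x n \<mu> (Suc n) = 0" "dUB m x n \<mu> (Suc n) = 0" by (simp_all add: dUA_out dUB_out)
    have hY: "(\<mu>-l) * Br n (dUB m x n l) (dUA m x n \<mu>) = \<mu>*UA m x n \<mu>*UB m x n l - l*UA m x n l*UB m x n \<mu>"
    proof -
      have "(\<mu>-l) * Br n (dUB m x n l) (dUA m x n \<mu>) = (l-\<mu>) * Br n (dUA m x n \<mu>) (dUB m x n l)"
        using Br_antisym[of n "dUB m x n l" "dUA m x n \<mu>"] by (simp add: algebra_simps)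
      then show ?thesis using Suc.IH[of \<mu> l] by simp
    qed
    note st = step_alg[OF False conjunct1[OF Suc.IH[of l \<mu>]] conjunct1[OF conjunct2[OF Suc.IH[of l \<mu>]]]
       conjunct2[OF conjunct2[OF Suc.IH[of l \<mu>]]] hY
       conjunct1[OF sums_inv] conjunct2[OF sums_inv] conjunct1[OF sums_inv] conjunct2[OF sums_inv],
       where nA = "dUA m x (Suc n) l" and b = b and nA' = "dUA m x (Suc n) \<mu>" and nB = "dUB m x (Suc n) l"
       and a = a and nB' = "dUB m x (Suc n) \<mu>"]
    have r: "Br (Suc n) (dUA m x (Suc n) l) (dUA m x (Suc n) \<mu>) = 0"
      "Br (Suc n) (dUB m x (Suc n) l) (dUB m x (Suc n) \<mu>) = 0"
      "(\<mu>-l) * Br (Suc n) (dUA m x (Suc n) l) (dUB m x (Suc n) \<mu>)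
        = l*(UA m x n l + b*UB m x n l)*(UB m x n \<mu> + \<mu>*a*UA m x n \<mu>)
          - \<mu>*(UA m x n \<mu> + b*UB m x n \<mu>)*(UB m x n l + l*a*UA m x n l)"
      by (rule st; simp add: dUA_Suc dUB_Suc outs a_def b_def algebra_simps)+
    then show ?thesis by (simp add: UA_Suc UB_Suc a_def b_def algebra_simps)
  qed
qed

end



lemma hI_upd: "finite I \<Longrightarrow> h_I m I (x(i:=t)) = h_I m I x * exp ((if i \<in> I then 1 else 0) * (t - x i))"
proof (cases "i \<in> I")
  case False
  then show ?thesis unfolding h_I_def by (auto intro!: prod.cong)
next
  case True
  assume fin: "finite I"
  have "h_I m I (x(i:=t)) = (m i * exp t) * (\<Prod>k\<in>I-{i}. m k * exp ((x(i:=t)) k))"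
    unfolding h_I_def by (subst prod.remove[OF fin True]) simp
  also have "(\<Prod>k\<in>I-{i}. m k * exp ((x(i:=t)) k)) = (\<Prod>k\<in>I-{i}. m k * exp (x k))"
    by (rule prod.cong) auto
  also have "h_I m I x = (m i * exp (x i)) * (\<Prod>k\<in>I-{i}. m k * exp (x k))"
    unfolding h_I_def using prod.remove[OF fin True] by simp
  moreover have "exp t = exp (x i) * exp (t - x i)" by (simp add: exp_add[symmetric])
  ultimately show ?thesis using True by (simp add: algebra_simps fun_upd_def)
qed

lemma gJ_upd: "finite J \<Longrightarrow> g_J m J (x(i:=t)) = g_J m J x * exp (- (if i \<in> J then 1 else 0) * (t - x i))"
proof (cases "i \<in> J")
  case False
  then show ?thesis unfolding g_J_def by (auto intro!: prod.cong)
next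
  case True
  assume fin: "finite J"
  have "g_J m J (x(i:=t)) = (m i * exp (- t)) * (\<Prod>k\<in>J-{i}. m k * exp (- (x(i:=t)) k))"
    unfolding g_J_def by (subst prod.remove[OF fin True]) simp
  also have "(\<Prod>k\<in>J-{i}. m k * exp (- (x(i:=t)) k)) = (\<Prod>k\<in>J-{i}. m k * exp (- x k))"
    by (rule prod.cong) auto
  also have "g_J m J x = (m i * exp (- x i)) * (\<Prod>k\<in>J-{i}. m k * exp (- x k))"
    unfolding g_J_def using prod.remove[OF fin True] by simp
  moreover have "exp (- t) = exp (- x i) * exp (- (t - x i))" by (simp add: exp_add[symmetric])
  ultimately show ?thesis using True by (simp add: algebra_simps fun_upd_def)
qed

lemma term_upd: "finite I \<Longrightarrow> finite J \<Longrightarrow>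
  h_I m I (x(i:=t)) * g_J m J (x(i:=t)) = wt m x I J * exp (ev I J i * (t - x i))"
  by (simp add: hI_upd gJ_upd wt_def ev_def mult_exp_exp algebra_simps)

lemma pderiv_sum:
  assumes fin: "finite S" and finIJ: "\<And>I J. (I,J) \<in> S \<Longrightarrow> finite I \<and> finite J"
  shows "pderiv_at (\<lambda>y. \<Sum>(I,J)\<in>S. h_I m I y * g_J m J y) i x = (\<Sum>(I,J)\<in>S. wt m x I J * ev I J i)"
proof -
  have eq: "(\<lambda>t. (\<Sum>(I,J)\<in>S. h_I m I (x(i:=t)) * g_J m J (x(i:=t))))
      = (\<lambda>t. \<Sum>p\<in>S. wt m x (fst p) (snd p) * exp (ev (fst p) (snd p) i * (t - x i)))"
  proof
    fix t show "(\<Sum>(I,J)\<in>S. h_I m I (x(i:=t)) * g_J m J (x(i:=t)))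
      = (\<Sum>p\<in>S. wt m x (fst p) (snd p) * exp (ev (fst p) (snd p) i * (t - x i)))"
      by (rule sum.cong) (auto dest: finIJ simp: term_upd)
  qed
  have "((\<lambda>t. \<Sum>p\<in>S. wt m x (fst p) (snd p) * exp (ev (fst p) (snd p) i * (t - x i)))
      has_field_derivative (\<Sum>p\<in>S. wt m x (fst p) (snd p) * ev (fst p) (snd p) i)) (at (x i))"
    by (rule DERIV_sum) (auto intro!: derivative_eq_intros)
  then show ?thesis unfolding pderiv_at_def eq
    by (subst DERIV_imp_deriv) (auto simp: case_prod_unfold)
qed




definition PT :: "nat \<Rightarrow> nat \<Rightarrow> (nat set \<times> nat set) set" where
  "PT n j = {p\<in>Pall n. card (fst p) = j}"
definition QT :: "nat \<Rightarrow> nat \<Rightarrow> (nat set \<times> nat set) set" where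
  "QT n j = {p\<in>Qall n. card (snd p) = j}"
definition DD where "DD m x n j i = (\<Sum>(I,J)\<in>PT n j. wt m x I J * ev I J i)"

lemma Hj_eq: "Hj K m j = (\<lambda>y. \<Sum>(I,J)\<in>PT (2*K+1) j. h_I m I y * g_J m J y)"
proof -
  have "{(I, J). I \<in> subsets_of (2*K+1) j \<and> J \<in> subsets_of (2*K+1) j \<and> interlace_eq I J} = PT (2*K+1) j"
    by (auto simp: PT_def Pall_def subsets_of_def)
  then show ?thesis by (simp add: Hj_def fun_eq_iff)
qed

lemma Hc_eq: "Hc K m = (\<lambda>y. \<Sum>(I,J)\<in>QT (2*K+1) K. h_I m I y * g_J m J y)"
proof -
  have "{(I, J). I \<in> subsets_of (2*K+1) (K+1) \<and> J \<in> subsets_of (2*K+1) K \<and> interlace_succ I J} = QT (2*K+1) K"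
    by (auto simp: QT_def Qall_def subsets_of_def)
  then show ?thesis by (simp add: Hc_def fun_eq_iff)
qed

lemma finite_PT: "finite (PT n j)" using finite_Pall by (simp add: PT_def)
lemma finite_QT: "finite (QT n j)" using finite_Qall by (simp add: QT_def)

lemma pd_Hj: "pderiv_at (Hj K m j) i x = DD m x (2*K+1) j i"
  unfolding Hj_eq DD_def
  by (rule pderiv_sum[OF finite_PT]) (auto simp: PT_def dest: Pall_facts)

lemma pd_Hc: "pderiv_at (Hc K m) i x = (\<Sum>(I,J)\<in>QT (2*K+1) K. wt m x I J * ev I J i)"
  unfolding Hc_eq
  by (rule pderiv_sum[OF finite_QT]) (auto simp: QT_def dest: Qall_facts)

lemma poisson_Br:
  assumes "x \<in> phase_M n"
  shows "poisson n f g x = Br n (\<lambda>i. pderiv_at f i x) (\<lambda>k. pderiv_at g k x)"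
  unfolding poisson_def Br_def
proof (intro sum.cong refl)
  fix i k assume i: "i \<in> {1..n}" and k: "k \<in> {1..n}"
  have M: "\<forall>i\<in>{1..n}. \<forall>k\<in>{1..n}. i < k \<longrightarrow> x i < x k" using assms by (simp add: phase_M_def)
  have "sgn (x i - x k) = sg i k"
    using M[rule_format, OF i k] M[rule_format, OF k i] by (cases i k rule: linorder_cases) (auto simp: sg_def sgn_if)
  then show "sgn (x i - x k) * pderiv_at f i x * pderiv_at g k x = sg i k * pderiv_at f i x * pderiv_at g k x"
    by simp
qed

lemma card_Pall: "(I,J) \<in> Pall n \<Longrightarrow> card I \<le> n"
proof -
  assume "(I,J) \<in> Pall n"
  then have "I \<subseteq> {1..n}" by (simp add: Pall_def)
  then show ?thesis using card_mono[of "{1..n}" I] by simp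
qed

lemma dUA_decomp: "dUA m x n l i = (\<Sum>j\<le>n. l^j * DD m x n j i)"
proof -
  have "dUA m x n l i = (\<Sum>j\<le>n. \<Sum>p\<in>{p. p \<in> Pall n \<and> card (fst p) = j}. l ^ card (fst p) * wt m x (fst p) (snd p) * ev (fst p) (snd p) i)"
    unfolding dUA_def case_prod_unfold
    by (rule sum.group[symmetric]) (auto simp: finite_Pall dest: card_Pall)
  also have "\<dots> = (\<Sum>j\<le>n. l^j * DD m x n j i)"
    unfolding DD_def PT_def case_prod_unfold sum_distrib_left
    by (intro sum.cong refl) (simp add: algebra_simps)
  finally show ?thesis .
qed

lemma dUA_decomp_fun: "dUA m x n l = (\<lambda>i. \<Sum>j\<le>n. l^j * DD m x n j i)"
  by (rule ext) (rule dUA_decomp)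

lemma Br_add2: "Br n (\<lambda>i. f i + f2 i) g = Br n f g + Br n f2 g"
  unfolding Br_def by (simp add: algebra_simps sum.distrib)
lemma Br_scale: "Br n (\<lambda>i. c * f i) g = c * Br n f g"
  unfolding Br_def by (simp add: algebra_simps sum_distrib_left)
lemma Br_zero: "Br n (\<lambda>i. 0) g = 0"
  unfolding Br_def by simp

lemma Br_sumL: "finite T \<Longrightarrow> Br n (\<lambda>i. \<Sum>j\<in>T. c j * f j i) g = (\<Sum>j\<in>T. c j * Br n (f j) g)"
proof (induction T rule: finite_induct)
  case empty then show ?case by (simp add: Br_zero)
next
  case (insert a T)
  then show ?case by (simp add: Br_add2 Br_scale)
qed

lemma Br_sumR:
  assumes fT: "finite T"
  shows "Br n g (\<lambda>i. \<Sum>j\<in>T. c j * f j i) = (\<Sum>j\<in>T. c j * Br n g (f j))"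
proof -
  have "Br n g (\<lambda>i. \<Sum>j\<in>T. c j * f j i) = - Br n (\<lambda>i. \<Sum>j\<in>T. c j * f j i) g" by (rule Br_antisym)
  also have "\<dots> = - (\<Sum>j\<in>T. c j * Br n (f j) g)" using Br_sumL[OF fT] by simp
  also have "\<dots> = (\<Sum>j\<in>T. - (c j * Br n (f j) g))" by (simp add: sum_negf)
  also have "\<dots> = (\<Sum>j\<in>T. c j * Br n g (f j))"
  proof (rule sum.cong[OF refl])
    fix j show "- (c j * Br n (f j) g) = c j * Br n g (f j)" using Br_antisym[of n g "f j"] by simp
  qed
  finally show ?thesis .
qed

lemma polyfun_eq_0': "(\<forall>x::real. (\<Sum>i\<le>n. x^i * c i) = 0) \<longleftrightarrow> (\<forall>i\<le>n. c i = 0)"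
  using polyfun_eq_0[where n = n and c = c] by (simp add: mult.commute)

lemma coeff2:
  fixes c :: "nat \<Rightarrow> nat \<Rightarrow> real"
  assumes A: "\<And>l \<mu>. (\<Sum>j\<le>n. l^j * (\<Sum>k\<le>n. \<mu>^k * c j k)) = 0"
  assumes j: "j \<le> n" and k: "k \<le> n"
  shows "c j k = 0"
proof -
  have "\<forall>\<mu>. (\<Sum>k\<le>n. \<mu>^k * c j k) = 0"
  proof
    fix \<mu> :: real
    have "\<forall>l. (\<Sum>j\<le>n. l^j * (\<Sum>k\<le>n. \<mu>^k * c j k)) = 0" using A by blast
    then have "\<forall>i\<le>n. (\<Sum>k\<le>n. \<mu>^k * c i k) = 0"
      by (rule polyfun_eq_0'[where n = n and c = "\<lambda>i. (\<Sum>k\<le>n. \<mu>^k * c i k)", THEN iffD1])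
    then show "(\<Sum>k\<le>n. \<mu>^k * c j k) = 0" using j by blast
  qed
  then have "\<forall>i\<le>n. c j i = 0" by (rule polyfun_eq_0'[where n = n and c = "c j", THEN iffD1])
  then show "c j k = 0" using k by blast
qed

lemma DD_comm: "j \<le> n \<Longrightarrow> k \<le> n \<Longrightarrow> Br n (DD m x n j) (DD m x n k) = 0"
proof -
  assume j: "j \<le> n" and k: "k \<le> n"
  have "\<And>l \<mu>. (\<Sum>j\<le>n. l^j * (\<Sum>k\<le>n. \<mu>^k * Br n (DD m x n j) (DD m x n k))) = 0"
  proof -
    fix l \<mu> :: real
    have "0 = Br n (dUA m x n l) (dUA m x n \<mu>)" using br_inv by simp
    also have "\<dots> = Br n (\<lambda>i. \<Sum>j\<le>n. l^j * DD m x n j i) (\<lambda>i. \<Sum>k\<le>n. \<mu>^k * DD m x n k i)"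
      by (simp only: dUA_decomp_fun)
    also have "\<dots> = (\<Sum>j\<le>n. l^j * Br n (DD m x n j) (\<lambda>i. \<Sum>k\<le>n. \<mu>^k * DD m x n k i))"
      by (rule Br_sumL) simp
    also have "\<dots> = (\<Sum>j\<le>n. l^j * (\<Sum>k\<le>n. \<mu>^k * Br n (DD m x n j) (DD m x n k)))"
      by (simp only: Br_sumR[OF finite_atMost])
    finally show "(\<Sum>j\<le>n. l^j * (\<Sum>k\<le>n. \<mu>^k * Br n (DD m x n j) (DD m x n k))) = 0" by simp
  qed
  from coeff2[OF this j k] show ?thesis .
qed




lemma deg_inv: "(\<forall>p\<in>Pall n. 2 * card (fst p) \<le> n) \<and> (\<forall>p\<in>Qall n. 2 * card (snd p) + 1 \<le> n)"
proof (induction n)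
  case 0 then show ?case by (simp add: Pall_0 Qall_0)
next
  case (Suc n)
  have P: "\<forall>p\<in>Pall (Suc n). 2 * card (fst p) \<le> Suc n"
  proof
    fix p assume "p \<in> Pall (Suc n)"
    then consider "p \<in> Pall n" | I J where "(I,J) \<in> Qall n" "p = (I, insert (Suc n) J)"
      unfolding Pall_Suc by auto
    then show "2 * card (fst p) \<le> Suc n"
    proof cases
      case 1 then show ?thesis using Suc.IH by fastforce
    next
      case 2 then show ?thesis using Suc.IH Qall_sub[OF 2(1)] by fastforce
    qed
  qed
  have Q: "\<forall>p\<in>Qall (Suc n). 2 * card (snd p) + 1 \<le> Suc n"
  proof
    fix p assume "p \<in> Qall (Suc n)"
    then consider "p \<in> Qall n" | I J where "(I,J) \<in> Pall n" "p = (insert (Suc n) I, J)"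
      unfolding Qall_Suc by auto
    then show "2 * card (snd p) + 1 \<le> Suc n"
    proof cases
      case 1 then show ?thesis using Suc.IH by fastforce
    next
      case 2 then show ?thesis using Suc.IH Pall_sub[OF 2(1)] by fastforce
    qed
  qed
  from P Q show ?case by blast
qed

lemma degP: "(I,J) \<in> Pall n \<Longrightarrow> 2 * card I \<le> n" using deg_inv[of n] by fastforce
lemma degQ: "(I,J) \<in> Qall n \<Longrightarrow> 2 * card J + 1 \<le> n" using deg_inv[of n] by fastforce

lemma QT_step: "QT (Suc (2*K)) K = (\<lambda>(I,J). (insert (Suc (2*K)) I, J)) ` PT (2*K) K"
proof (intro equalityI subsetI)
  fix p assume "p \<in> QT (Suc (2*K)) K"
  then have p: "p \<in> Qall (Suc (2*K))" "card (snd p) = K" by (auto simp: QT_def)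
  then consider "p \<in> Qall (2*K)" | I J where "(I,J) \<in> Pall (2*K)" "p = (insert (Suc (2*K)) I, J)"
    unfolding Qall_Suc by auto
  then show "p \<in> (\<lambda>(I,J). (insert (Suc (2*K)) I, J)) ` PT (2*K) K"
  proof cases
    case 1
    have "2 * card (snd p) + 1 \<le> 2*K" using degQ[of "fst p" "snd p" "2*K"] 1 by simp
    then show ?thesis using p(2) by simp
  next
    case 2 then show ?thesis using p(2) Pall_sub[OF 2(1)] unfolding PT_def by force
  qed
next
  fix p assume "p \<in> (\<lambda>(I,J). (insert (Suc (2*K)) I, J)) ` PT (2*K) K"
  then obtain I J where "(I,J) \<in> Pall (2*K)" "card I = K" "p = (insert (Suc (2*K)) I, J)"
    by (auto simp: PT_def)
  then show "p \<in> QT (Suc (2*K)) K" unfolding QT_def Qall_Suc using Pall_sub by auto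
qed

lemma PT_step: "PT (Suc (Suc (2*K))) (Suc K) = (\<lambda>(I,J). (I, insert (Suc (Suc (2*K))) J)) ` QT (Suc (2*K)) K"
proof (intro equalityI subsetI)
  fix p assume "p \<in> PT (Suc (Suc (2*K))) (Suc K)"
  then have p: "p \<in> Pall (Suc (Suc (2*K)))" "card (fst p) = Suc K" by (auto simp: PT_def)
  then consider "p \<in> Pall (Suc (2*K))" | I J where "(I,J) \<in> Qall (Suc (2*K))" "p = (I, insert (Suc (Suc (2*K))) J)"
    unfolding Pall_Suc[of "Suc (2*K)"] by auto
  then show "p \<in> (\<lambda>(I,J). (I, insert (Suc (Suc (2*K))) J)) ` QT (Suc (2*K)) K"
  proof cases
    case 1
    have "2 * card (fst p) \<le> Suc (2*K)" using degP[of "fst p" "snd p" "Suc (2*K)"] 1 by simp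
    then show ?thesis using p(2) by simp
  next
    case 2 then show ?thesis using p(2) Qall_sub[OF 2(1)] unfolding QT_def by force
  qed
next
  fix p assume "p \<in> (\<lambda>(I,J). (I, insert (Suc (Suc (2*K))) J)) ` QT (Suc (2*K)) K"
  then obtain I J where "(I,J) \<in> Qall (Suc (2*K))" "card J = K" "p = (I, insert (Suc (Suc (2*K))) J)"
    by (auto simp: QT_def)
  then show "p \<in> PT (Suc (Suc (2*K))) (Suc K)" unfolding PT_def Pall_Suc[of "Suc (2*K)"] using Qall_sub by auto
qed

definition Od :: "nat \<Rightarrow> nat set" where "Od K = {i\<in>{1..2*K}. odd i}"
definition Ev :: "nat \<Rightarrow> nat set" where "Ev K = {i\<in>{1..2*K}. even i}"

lemma Od_Suc: "Od (Suc K) = insert (Suc (2*K)) (Od K)"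
  unfolding Od_def by auto presburger
lemma Ev_Suc: "Ev (Suc K) = insert (Suc (Suc (2*K))) (Ev K)"
  unfolding Ev_def by auto

lemma top: "PT (2*K) K = {(Od K, Ev K)} \<and> QT (Suc (2*K)) K = {(insert (Suc (2*K)) (Od K), Ev K)}"
proof (induction K)
  case 0
  have "PT 0 0 = {({},{})}" by (auto simp: PT_def Pall_0)
  moreover have "Od 0 = {}" "Ev 0 = {}" by (auto simp: Od_def Ev_def)
  ultimately show ?case using QT_step[of 0] by simp
next
  case (Suc K)
  have "PT (2 * Suc K) (Suc K) = {(Od (Suc K), Ev (Suc K))}"
    using PT_step[of K] Suc.IH by (simp add: Od_Suc Ev_Suc)
  moreover then have "QT (Suc (2 * Suc K)) (Suc K) = {(insert (Suc (2 * Suc K)) (Od (Suc K)), Ev (Suc K))}"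
    using QT_step[of "Suc K"] by simp
  ultimately show ?case by blast
qed

definition sig :: "nat \<Rightarrow> real" where "sig k = (if odd k then 1 else -1)"

lemma T_sig: "(\<Sum>k\<in>{1..p}. sig k) = (if odd p then 1 else 0)"
  by (induction p) (auto simp: ivl_Suc sig_def)

lemma inner_zero:
  assumes i: "i \<in> {1..Suc (2*K)}"
  shows "(\<Sum>k\<in>{1..Suc (2*K)}. sg i k * sig k) = 0"
proof -
  let ?n = "Suc (2*K)"
  have "(\<Sum>k\<in>{1..?n}. sg i k * sig k) = (\<Sum>k\<in>{1..?n}. (if k < i then sig k else 0)) - (\<Sum>k\<in>{1..?n}. (if i < k then sig k else 0))"
    unfolding sum_subtractf[symmetric] by (intro sum.cong refl) (auto simp: sg_def)
  also have "(\<Sum>k\<in>{1..?n}. (if k < i then sig k else 0)) = (\<Sum>k\<in>{1..i-1}. sig k)"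
  proof -
    have "{k\<in>{1..?n}. k < i} = {1..i-1}" using i by auto
    then show ?thesis using sum.inter_filter[of "{1..?n}" sig "\<lambda>k. k < i"] by simp
  qed
  also have "(\<Sum>k\<in>{1..?n}. (if i < k then sig k else 0)) = (\<Sum>k\<in>{1..?n}. sig k) - (\<Sum>k\<in>{1..i}. sig k)"
  proof -
    have "{k\<in>{1..?n}. k \<le> i} = {1..i}" using i by auto
    then have a: "(\<Sum>k\<in>{1..?n}. (if k \<le> i then sig k else 0)) = (\<Sum>k\<in>{1..i}. sig k)"
      using sum.inter_filter[of "{1..?n}" sig "\<lambda>k. k \<le> i"] by simp
    have "(\<Sum>k\<in>{1..?n}. sig k) = (\<Sum>k\<in>{1..?n}. (if k \<le> i then sig k else 0)) + (\<Sum>k\<in>{1..?n}. (if i < k then sig k else 0))"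
      unfolding sum.distrib[symmetric] by (intro sum.cong refl) auto
    then show ?thesis using a by simp
  qed
  finally have eq: "(\<Sum>k\<in>{1..?n}. sg i k * sig k) = (\<Sum>k\<in>{1..i-1}. sig k) - ((\<Sum>k\<in>{1..?n}. sig k) - (\<Sum>k\<in>{1..i}. sig k))" .
  have h3: "(\<Sum>k\<in>{1..?n}. sig k) = 1" using T_sig[of "Suc (2*K)"] by simp
  have h4: "odd (i-1) \<longleftrightarrow> even i" using i by (cases i) auto
  have "(\<Sum>k\<in>{1..?n}. sg i k * sig k) = (if odd (i-1) then 1 else 0) - ((if odd (Suc (2*K)) then 1 else 0) - (if odd i then 1 else 0))"
    using eq unfolding T_sig .
  then show ?thesis using h4 by (cases "even i") auto
qed

lemma Br_sig: "Br (Suc (2*K)) f (\<lambda>k. c * sig k) = 0"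
proof -
  have "Br (Suc (2*K)) f (\<lambda>k. c * sig k) = (\<Sum>i\<in>{1..Suc (2*K)}. f i * c * (\<Sum>k\<in>{1..Suc (2*K)}. sg i k * sig k))"
    unfolding Br_def by (intro sum.cong refl) (simp add: sum_distrib_left algebra_simps)
  also have "\<dots> = 0"
  proof (intro sum.neutral ballI)
    fix i assume "i \<in> {1..Suc (2*K)}"
    from inner_zero[OF this] show "f i * c * (\<Sum>k\<in>{1..Suc (2*K)}. sg i k * sig k) = 0"
      by (metis mult_zero_right)
  qed
  finally show ?thesis .
qed




theorem theorem5:
  fixes K :: nat and m :: "nat \<Rightarrow> real" and x :: "nat \<Rightarrow> real"
  assumes m_pos: "\<forall>i\<in>{1..2*K+1}. m i > 0"
    and x_in_M: "x \<in> phase_M (2*K+1)"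
  shows "(\<forall>j\<in>{1..K}. \<forall>l\<in>{1..K}. poisson (2*K+1) (Hj K m j) (Hj K m l) x = 0)
       \<and> (\<forall>j\<in>{1..K}. poisson (2*K+1) (Hj K m j) (Hc K m) x = 0
                     \<and> poisson (2*K+1) (Hc K m) (Hj K m j) x = 0)
       \<and> poisson (2*K+1) (Hc K m) (Hc K m) x = 0"
proof -
  have nS: "2*K+1 = Suc (2*K)" by simp
  have PB: "\<And>f g. poisson (2*K+1) f g x = Br (2*K+1) (\<lambda>i. pderiv_at f i x) (\<lambda>k. pderiv_at g k x)"
    using poisson_Br[OF x_in_M] .
  have dHj: "\<And>j. (\<lambda>i. pderiv_at (Hj K m j) i x) = DD m x (2*K+1) j"
    by (rule ext) (rule pd_Hj)
  define Os where "Os = insert (Suc (2*K)) (Od K)"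
  define Es where "Es = Ev K"
  have QTe: "QT (2*K+1) K = {(Os, Es)}" using top[of K] by (simp add: Os_def Es_def)
  have dHc: "\<And>k. pderiv_at (Hc K m) k x = wt m x Os Es * ev Os Es k" using pd_Hc[of K m] QTe by simp
  have evs: "\<And>k. k \<in> {1..2*K+1} \<Longrightarrow> ev Os Es k = sig k"
  proof -
    fix k assume k: "k \<in> {1..2*K+1}"
    show "ev Os Es k = sig k"
    proof (cases "odd k")
      case True then show ?thesis using k by (auto simp: ev_def sig_def Os_def Es_def Od_def Ev_def)
    next
      case False
      then have "k \<le> 2*K" using k by presburger
      then show ?thesis using k False by (auto simp: ev_def sig_def Os_def Es_def Od_def Ev_def)
    qed
  qed
  have BrHc: "\<And>f. Br (2*K+1) f (\<lambda>k. pderiv_at (Hc K m) k x) = 0"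
  proof -
    fix f
    have "Br (2*K+1) f (\<lambda>k. pderiv_at (Hc K m) k x) = Br (2*K+1) f (\<lambda>k. wt m x Os Es * sig k)"
      by (rule Br_cong) (simp_all add: dHc evs)
    also have "\<dots> = 0" unfolding nS by (rule Br_sig)
    finally show "Br (2*K+1) f (\<lambda>k. pderiv_at (Hc K m) k x) = 0" .
  qed
  have A: "\<forall>j\<in>{1..K}. \<forall>l\<in>{1..K}. poisson (2*K+1) (Hj K m j) (Hj K m l) x = 0"
    unfolding PB dHj by (auto intro!: DD_comm)
  have B: "\<forall>j\<in>{1..K}. poisson (2*K+1) (Hj K m j) (Hc K m) x = 0
                     \<and> poisson (2*K+1) (Hc K m) (Hj K m j) x = 0"
  proof
    fix j
    have "poisson (2*K+1) (Hc K m) (Hj K m j) x = - poisson (2*K+1) (Hj K m j) (Hc K m) x"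
      unfolding PB by (rule Br_antisym)
    then show "poisson (2*K+1) (Hj K m j) (Hc K m) x = 0 \<and> poisson (2*K+1) (Hc K m) (Hj K m j) x = 0"
      unfolding PB using BrHc by simp
  qed
  have C: "poisson (2*K+1) (Hc K m) (Hc K m) x = 0" unfolding PB by (rule Br_self)
  from A B C show ?thesis by blast
qed



end
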